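(* Under the setting below with $m\ge 3$, for every $\gamma=(\gamma_{12},\gamma_{13},\gamma_{23})\in\mathbb{C}^3$, \[s_{3m-2}\big(\mathcal{S}_3(D,\gamma)\big)\le \max\{\|M_1\|_2,\|M_2\|_2,\|M_3\|_2\}.\]
   Context: $A\in\mathbb{C}^{n\times n}$, $B\in\mathbb{C}^{n\times m}$, $C\in\mathbb{C}^{m\times n}$, $D\in\mathbb{C}^{m\times m}$; $\lambda_1,\lambda_2,\lambda_3$ are distinct complex numbers, none an eigenvalue of $A$. $s_j(\cdot)$ denotes the $j$-th largest singular value. Write $A_i^{-1}=(A-\lambda_iI_n)^{-1}$, $M_i=(D-\lambda_iI_m)-CA_i^{-1}B$, $N_{ij}=I_m+CA_i^{-1}A_j^{-1}B$, $P_{123}=CA_1^{-1}A_2^{-1}A_3^{-1}B$, and \[\mathcal{S}_3(D,\gamma)=\begin{bmatrix}M_1&\gamma_{12}N_{12}&\gamma_{13}N_{13}-\gamma_{12}\gamma_{23}P_{123}\\0&M_2&\gamma_{23}N_{23}\\0&0&M_3\end{bmatrix}.\] *)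

theory Defs
  imports "Jordan_Normal_Form.Schur_Decomposition" "Jordan_Normal_Form.Char_Poly"
begin

(* inverse of a square matrix (meaningful when it is invertible) *)
definition cinv :: "complex mat \<Rightarrow> complex mat" where
  "cinv X = (SOME Y. Y \<in> carrier_mat (dim_row X) (dim_row X) \<and>
                     X * Y = 1\<^sub>m (dim_row X) \<and> Y * X = 1\<^sub>m (dim_row X))"

definition eigs :: "complex mat \<Rightarrow> complex list" where
  "eigs X = (SOME as. char_poly X = (\<Prod>a\<leftarrow>as. [:- a, 1:]) \<and> length as = dim_row X)"

definition sing_vals :: "complex mat \<Rightarrow> real list" where
  "sing_vals X = rev (sort (map (\<lambda>a. sqrt (Re a)) (eigs (mat_adjoint X * X))))"

(* s_j(X): the j-th largest singular value, j \<ge> 1 *)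
definition sval :: "nat \<Rightarrow> complex mat \<Rightarrow> real" where
  "sval j X = sing_vals X ! (j - 1)"

definition vnorm2 :: "complex vec \<Rightarrow> real" where
  "vnorm2 v = sqrt (\<Sum>i<dim_vec v. (cmod (v $ i))\<^sup>2)"

definition mnorm2 :: "complex mat \<Rightarrow> real" where
  "mnorm2 X = Sup {vnorm2 (X *\<^sub>v v) | v. v \<in> carrier_vec (dim_col X) \<and> vnorm2 v = 1}"

definition resA :: "complex mat \<Rightarrow> complex \<Rightarrow> complex mat" where
  "resA A l = cinv (A - l \<cdot>\<^sub>m 1\<^sub>m (dim_row A))"

definition Mmat :: "complex mat \<Rightarrow> complex mat \<Rightarrow> complex mat \<Rightarrow> complex mat \<Rightarrow> complex \<Rightarrow> complex mat" where
  "Mmat A B C D l = (D - l \<cdot>\<^sub>m 1\<^sub>m (dim_row D)) - C * resA A l * B"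

definition Nmat :: "complex mat \<Rightarrow> complex mat \<Rightarrow> complex mat \<Rightarrow> complex \<Rightarrow> complex \<Rightarrow> complex mat" where
  "Nmat A B C li lj = 1\<^sub>m (dim_row C) + C * resA A li * resA A lj * B"

definition Pmat :: "complex mat \<Rightarrow> complex mat \<Rightarrow> complex mat \<Rightarrow> complex \<Rightarrow> complex \<Rightarrow> complex \<Rightarrow> complex mat" where
  "Pmat A B C l1 l2 l3 = C * resA A l1 * resA A l2 * resA A l3 * B"

definition block3 :: "nat \<Rightarrow> complex mat \<Rightarrow> complex mat \<Rightarrow> complex mat \<Rightarrow> complex mat \<Rightarrow> complex mat
    \<Rightarrow> complex mat \<Rightarrow> complex mat \<Rightarrow> complex mat \<Rightarrow> complex mat \<Rightarrow> complex mat" where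
  "block3 m X11 X12 X13 X21 X22 X23 X31 X32 X33 =
     mat (3 * m) (3 * m) (\<lambda>(i, j).
       let bi = i div m; bj = j div m; r = i mod m; c = j mod m;
           X = (if bi = 0 then (if bj = 0 then X11 else if bj = 1 then X12 else X13)
                else if bi = 1 then (if bj = 0 then X21 else if bj = 1 then X22 else X23)
                else (if bj = 0 then X31 else if bj = 1 then X32 else X33))
       in X $$ (r, c))"

definition S3 :: "nat \<Rightarrow> complex mat \<Rightarrow> complex mat \<Rightarrow> complex mat \<Rightarrow> complex mat
    \<Rightarrow> complex \<Rightarrow> complex \<Rightarrow> complex \<Rightarrow> complex \<Rightarrow> complex \<Rightarrow> complex \<Rightarrow> complex mat" where
  "S3 m A B C D l1 l2 l3 g12 g13 g23 =
     block3 m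
       (Mmat A B C D l1) (g12 \<cdot>\<^sub>m Nmat A B C l1 l2)
         (g13 \<cdot>\<^sub>m Nmat A B C l1 l3 - (g12 * g23) \<cdot>\<^sub>m Pmat A B C l1 l2 l3)
       (0\<^sub>m m m) (Mmat A B C D l2) (g23 \<cdot>\<^sub>m Nmat A B C l2 l3)
       (0\<^sub>m m m) (0\<^sub>m m m) (Mmat A B C D l3)"

end

theory Submission
  imports Defs
begin

lemma mult_entry: "i < dim_row A \<Longrightarrow> j < dim_col B \<Longrightarrow> dim_col A = dim_row B \<Longrightarrow>
  (A * B) $$ (i,j) = (\<Sum>k<dim_row B. A $$ (i,k) * B $$ (k,j))"
  by (simp add: scalar_prod_def atLeast0LessThan)

lemma mv_entry: "i < dim_row A \<Longrightarrow> dim_col A = dim_vec v \<Longrightarrow>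
  (A *\<^sub>v v) $ i = (\<Sum>k<dim_vec v. A $$ (i,k) * v $ k)"
  by (simp add: scalar_prod_def atLeast0LessThan)

lemma adj_dims[simp]: "dim_row (mat_adjoint X) = dim_col X" "dim_col (mat_adjoint X) = dim_row X"
  by (auto simp: mat_adjoint_def)

lemma adj_index[simp]: "i < dim_col X \<Longrightarrow> j < dim_row X \<Longrightarrow> mat_adjoint X $$ (i,j) = cnj (X $$ (j,i))"
  by (simp add: mat_adjoint_def mat_of_rows_def)

lemma adj_carrier[simp]: "X \<in> carrier_mat r c \<Longrightarrow> mat_adjoint X \<in> carrier_mat c r"
  unfolding carrier_mat_def by simp

lemma adj_adj[simp]: "mat_adjoint (mat_adjoint (X::complex mat)) = X"
  by (rule eq_matI) auto

lemma adj_mult: fixes A B :: "complex mat" assumes "A \<in> carrier_mat r k" "B \<in> carrier_mat k c"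
  shows "mat_adjoint (A*B) = mat_adjoint B * mat_adjoint A"
proof (rule eq_matI)
  fix i j assume "i < dim_row (mat_adjoint B * mat_adjoint A)" "j < dim_col (mat_adjoint B * mat_adjoint A)"
  then show "mat_adjoint (A*B) $$ (i,j) = (mat_adjoint B * mat_adjoint A) $$ (i,j)"
    using assms by (simp add: mult_entry cnj_sum mult.commute del: index_mult_mat(1))
qed (use assms in auto)

lemma adj_one[simp]: "mat_adjoint (1\<^sub>m n :: complex mat) = 1\<^sub>m n"
  by (rule eq_matI) auto

lemma unit_entry: "(A::complex mat) \<in> carrier_mat m n \<Longrightarrow> i < m \<Longrightarrow> k < n \<Longrightarrow> (A *\<^sub>v unit_vec n k) $ i = A $$ (i,k)"
  by (simp add: mv_entry if_distrib cong: if_cong del: index_mult_mat_vec)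

lemma sp_sum: "dim_vec w = n \<Longrightarrow> v \<bullet> w = (\<Sum>k<n. v$k * w$k)"
  by (simp add: scalar_prod_def atLeast0LessThan)

lemma adj_ip: fixes A :: "complex mat" assumes A: "A \<in> carrier_mat r c" and v: "v \<in> carrier_vec c" and w: "w \<in> carrier_vec r"
  shows "conjugate v \<bullet> (mat_adjoint A *\<^sub>v w) = conjugate (A *\<^sub>v v) \<bullet> w"
proof -
  have "conjugate v \<bullet> (mat_adjoint A *\<^sub>v w) = (\<Sum>i<c. cnj (v$i) * (\<Sum>k<r. cnj (A$$(k,i)) * w$k))"
    using A v w by (subst sp_sum[of _ c], simp, intro sum.cong refl, auto simp: mv_entry simp del: index_mult_mat_vec)
  also have "\<dots> = (\<Sum>i<c. \<Sum>k<r. cnj (A$$(k,i)) * cnj (v$i) * w$k)"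
    by (simp add: sum_distrib_left mult.assoc mult.left_commute)
  also have "\<dots> = (\<Sum>k<r. \<Sum>i<c. cnj (A$$(k,i)) * cnj (v$i) * w$k)"
    by (rule sum.swap)
  also have "\<dots> = (\<Sum>k<r. cnj (\<Sum>i<c. A$$(k,i) * v$i) * w$k)"
    by (simp add: sum_distrib_right cnj_sum)
  also have "\<dots> = conjugate (A *\<^sub>v v) \<bullet> w"
    using A v w by (subst sp_sum[of _ r], simp, intro sum.cong refl, auto simp: mv_entry simp del: index_mult_mat_vec)
  finally show ?thesis .
qed

lemma fta: fixes p :: "complex poly" assumes "degree p > 0" shows "\<exists>z. poly p z = 0"
proof -
  have "\<not> constant (poly p)" using assms constant_degree[of p] by simp
  then show ?thesis using fundamental_theorem_of_algebra by blast
qed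

lemma vec_eq_entries: "v \<in> carrier_vec n \<Longrightarrow> w \<in> carrier_vec n \<Longrightarrow> (\<And>i. i < n \<Longrightarrow> v $ i = w $ i) \<Longrightarrow> v = w"
proof -
  assume v: "v \<in> carrier_vec n" and w: "w \<in> carrier_vec n" and e: "\<And>i. i < n \<Longrightarrow> v $ i = w $ i"
  have dv: "dim_vec v = n" and dw: "dim_vec w = n" using v w by (simp_all only: carrier_vec_def mem_Collect_eq)
  show "v = w"
  proof (rule eq_vecI)
    fix i assume "i < dim_vec w" then show "v $ i = w $ i" using e dw by metis
  qed (simp only: dv dw)
qed

lemma mat_eq_by_unit: fixes A B :: "complex mat"
  assumes A: "A \<in> carrier_mat n n" and B: "B \<in> carrier_mat n n" and e: "\<And>k. k < n \<Longrightarrow> A *\<^sub>v unit_vec n k = B *\<^sub>v unit_vec n k"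
  shows "A = B"
proof -
  have dA: "dim_row A = n" "dim_col A = n" using carrier_matD[OF A] by simp_all
  have dB: "dim_row B = n" "dim_col B = n" using carrier_matD[OF B] by simp_all
  show ?thesis
  proof (rule eq_matI)
    fix i j assume "i < dim_row B" "j < dim_col B"
    then have i: "i < n" and j: "j < n" using dB by simp_all
    have "A $$ (i,j) = (A *\<^sub>v unit_vec n j) $ i" using unit_entry[OF A i j] by simp
    also have "\<dots> = (B *\<^sub>v unit_vec n j) $ i" using e[OF j] by simp
    also have "\<dots> = B $$ (i,j)" using unit_entry[OF B i j] by simp
    finally show "A $$ (i,j) = B $$ (i,j)" .
  qed (simp_all add: dA dB)
qed

lemma zc: "z * cnj z = (complex_of_real (cmod z))^2"
  by (metis complex_norm_square of_real_power)

lemma zc': "cnj z * z = (complex_of_real (cmod z))^2"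
  by (metis complex_norm_square of_real_power mult.commute)

lemma householder:
  fixes u :: "complex vec"
  assumes u: "u \<in> carrier_vec n" and jn: "j < n" and un: "(\<Sum>i<n. u$i * cnj (u$i)) = 1"
    and u0: "\<forall>i<j. u$i = 0"
  shows "\<exists>V \<beta>. V \<in> carrier_mat n n \<and> mat_adjoint V = V \<and> V * V = 1\<^sub>m n \<and>
     (\<forall>i<j. V *\<^sub>v unit_vec n i = unit_vec n i) \<and> V *\<^sub>v unit_vec n j = \<beta> \<cdot>\<^sub>v u"
proof -
  define \<beta> where "\<beta> = (if u$j = 0 then 1 else cnj (u$j) / cmod (u$j))"
  have bu: "\<beta> * u$j = of_real (cmod (u$j))"
  proof (cases "u$j = 0")
    case False
    have "cnj (u$j) * u$j = of_real (cmod (u$j))^2" using zc'[of "u$j"] by simp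
    then show ?thesis using False by (simp add: \<beta>_def power2_eq_square)
  qed (simp add: \<beta>_def)
  have bb: "\<beta> * cnj \<beta> = 1"
  proof (cases "u$j = 0")
    case False
    have "cnj (u$j) * u$j = of_real (cmod (u$j))^2" using zc'[of "u$j"] by simp
    then show ?thesis using False by (simp add: \<beta>_def power2_eq_square field_simps)
  qed (simp add: \<beta>_def)
  define w where "w = unit_vec n j - \<beta> \<cdot>\<^sub>v u"
  have w: "w \<in> carrier_vec n" using u by (simp add: w_def)
  have wi: "\<And>i. i < n \<Longrightarrow> w$i = (if i = j then 1 else 0) - \<beta> * u$i"
    using u by (simp add: w_def unit_vec_def)
  have wlow: "\<And>i. i < j \<Longrightarrow> w$i = 0" using wi u0 jn by simp
  define sr where "sr = (\<Sum>i<n. (cmod (w$i))^2)"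
  define s where "s = (\<Sum>i<n. w$i * cnj (w$i))"
  have s_sr: "s = of_real sr" unfolding s_def sr_def of_real_sum
    by (intro sum.cong refl) (simp add: zc)
  have "s = (\<Sum>i<n. ((if i = j then 1 else 0) - \<beta> * u$i) * ((if i = j then 1 else 0) - cnj \<beta> * cnj (u$i)))"
    unfolding s_def by (intro sum.cong refl) (simp add: wi)
  also have "\<dots> = (\<Sum>i<n. (if i = j then 1 - \<beta> * u$i - cnj \<beta> * cnj (u$i) else 0) + (\<beta> * cnj \<beta>) * (u$i * cnj (u$i)))"
    by (intro sum.cong refl) (simp add: algebra_simps)
  also have "\<dots> = (1 - \<beta> * u$j - cnj \<beta> * cnj (u$j)) + (\<beta> * cnj \<beta>) * (\<Sum>i<n. u$i * cnj (u$i))"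
    using jn by (simp add: sum.distrib sum_distrib_left)
  also have "\<dots> = 2 - 2 * of_real (cmod (u$j))"
    using bu un bb by (simp add: complex_cnj_mult[symmetric])
  finally have s2: "s = 2 - 2 * of_real (cmod (u$j))" .
  define c where "c = 2 / s"
  have cnjs: "cnj s = s" using s_sr by simp
  have cnjc: "cnj c = c" using cnjs by (simp add: c_def)
  have cs: "c * (2 - c * s) = 0" by (cases "s = 0") (simp_all add: c_def)
  define V where "V = mat n n (\<lambda>(i,k). (if i = k then 1 else 0) - c * w$i * cnj (w$k))"
  have V: "V \<in> carrier_mat n n" by (simp add: V_def)
  define g where "g x = (\<Sum>k<n. cnj (w$k) * x$k)" for x
  have Vx: "(V *\<^sub>v x) $ i = x$i - c * g x * w$i" if "x \<in> carrier_vec n" "i < n" for x i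
  proof -
    have "(V *\<^sub>v x) $ i = (\<Sum>k<n. ((if i = k then 1 else 0) - c * w$i * cnj (w$k)) * x$k)"
      using that by (simp add: mv_entry V_def del: index_mult_mat_vec)
    also have "\<dots> = (\<Sum>k<n. (if i = k then x$k else 0) - (c * w$i) * (cnj (w$k) * x$k))"
      by (intro sum.cong refl) (simp add: algebra_simps)
    also have "\<dots> = (\<Sum>k<n. (if i = k then x$k else 0)) - (c * w$i) * (\<Sum>k<n. cnj (w$k) * x$k)"
      by (simp only: sum_subtractf sum_distrib_left)
    also have "\<dots> = x$i - c * g x * w$i"
      using that by (simp add: g_def)
    finally show ?thesis .
  qed
  have gw: "g w = s" unfolding g_def s_def by (intro sum.cong refl) simp
  have Vxc: "V *\<^sub>v x \<in> carrier_vec n" for x by (rule carrier_vecI) (simp add: V_def)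
  have gV: "g (V *\<^sub>v x) = g x - c * g x * s" if "x \<in> carrier_vec n" for x
  proof -
    have "g (V *\<^sub>v x) = (\<Sum>k<n. cnj (w$k) * x$k - (c * g x) * (w$k * cnj (w$k)))"
      unfolding g_def[of "V *\<^sub>v x"] by (intro sum.cong refl) (simp add: Vx[OF that] algebra_simps)
    also have "\<dots> = g x - c * g x * s"
      by (simp only: sum_subtractf flip: sum_distrib_left) (simp only: g_def s_def)
    finally show ?thesis .
  qed
  have VV: "V * V = 1\<^sub>m n"
  proof (rule mat_eq_by_unit[of _ n])
    fix k assume k: "k < n"
    show "(V * V) *\<^sub>v unit_vec n k = 1\<^sub>m n *\<^sub>v unit_vec n k"
    proof (rule vec_eq_entries[of _ n])
      fix i assume i: "i < n"
      let ?x = "unit_vec n k"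
      have "((V * V) *\<^sub>v ?x) $ i = (V *\<^sub>v (V *\<^sub>v ?x)) $ i" using V by simp
      also have "\<dots> = ?x $ i - c * g ?x * w $ i - c * (g ?x - c * g ?x * s) * w$i"
        using Vx[OF Vxc i] Vx[OF _ i, of ?x] gV[of ?x] by simp
      also have "\<dots> = ?x $ i - (c * (2 - c * s)) * g ?x * w$i"
        by (simp add: algebra_simps)
      also have "\<dots> = (1\<^sub>m n *\<^sub>v ?x) $ i" using cs by simp
      finally show "((V * V) *\<^sub>v ?x) $ i = (1\<^sub>m n *\<^sub>v ?x) $ i" .
    qed (use V in simp_all)
  qed (use V in simp_all)
  have adjV: "mat_adjoint V = V"
  proof (rule eq_matI)
    fix i k assume "i < dim_row V" "k < dim_col V"
    then show "mat_adjoint V $$ (i,k) = V $$ (i,k)"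
      using cnjc by (simp add: V_def mult.commute mult.left_commute)
  qed (simp_all add: V_def)
  have low: "V *\<^sub>v unit_vec n i = unit_vec n i" if "i < j" for i
  proof (rule vec_eq_entries[of _ n])
    fix l assume l: "l < n"
    have "g (unit_vec n i) = cnj (w$i)" using that jn
      by (simp add: g_def if_distrib cong: if_cong)
    then show "(V *\<^sub>v unit_vec n i) $ l = unit_vec n i $ l"
      using Vx[OF _ l, of "unit_vec n i"] wlow[OF that] by simp
  qed (use V in simp_all)
  have gj: "g (unit_vec n j) = 1 - of_real (cmod (u$j))"
  proof -
    have "g (unit_vec n j) = cnj (w$j)" using jn
      by (simp add: g_def if_distrib cong: if_cong)
    also have "\<dots> = 1 - cnj (\<beta> * u$j)" using wi[OF jn] by simp
    finally show ?thesis using bu by simp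
  qed
  have cgw: "c * g (unit_vec n j) * w$l = w$l" if "l < n" for l
  proof (cases "s = 0")
    case True
    then have "sr = 0" using s_sr by simp
    then have "(cmod (w$l))^2 = 0" unfolding sr_def using that
      by (subst (asm) sum_nonneg_eq_0_iff) auto
    then show ?thesis by simp
  next
    case False
    have "g (unit_vec n j) = s / 2" using gj s2 by simp
    then have "c * g (unit_vec n j) = 1" using False by (simp add: c_def mult.commute)
    then show ?thesis by simp
  qed
  have top: "V *\<^sub>v unit_vec n j = \<beta> \<cdot>\<^sub>v u"
  proof (rule vec_eq_entries[of _ n])
    fix l assume l: "l < n"
    have "(V *\<^sub>v unit_vec n j) $ l = unit_vec n j $ l - c * g (unit_vec n j) * w$l"
      using Vx[OF _ l, of "unit_vec n j"] by simp
    also have "\<dots> = unit_vec n j $ l - w$l" using cgw[OF l] by simp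
    also have "\<dots> = (\<beta> \<cdot>\<^sub>v u) $ l" using wi[OF l] u l by (simp add: unit_vec_def)
    finally show "(V *\<^sub>v unit_vec n j) $ l = (\<beta> \<cdot>\<^sub>v u) $ l" .
  qed (use V u in simp_all)
  show ?thesis using V adjV VV low top by blast
qed

lemma shift_sum: fixes f :: "nat \<Rightarrow> 'a::comm_monoid_add" and j n :: nat assumes "j \<le> n"
  shows "(\<Sum>k<n. if k < j then 0 else f k) = (\<Sum>b<n-j. f (b+j))"
proof -
  have "(\<Sum>k<n. if k < j then 0 else f k) = (\<Sum>k\<in>{j..<n}. if k < j then 0 else f k)"
    by (rule sum.mono_neutral_right) auto
  also have "\<dots> = (\<Sum>k\<in>{j..<n}. f k)" by (intro sum.cong refl) simp
  also have "\<dots> = sum f {0+j..<(n-j)+j}" using assms by simp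
  also have "\<dots> = (\<Sum>b\<in>{0..<n-j}. f (b+j))" by (rule sum.shift_bounds_nat_ivl)
  finally show ?thesis by (simp add: lessThan_atLeast0)
qed

lemma spectral_step:
  fixes H U :: "complex mat"
  assumes H: "H \<in> carrier_mat n n" and hH: "mat_adjoint H = H"
    and U: "U \<in> carrier_mat n n" and uU1: "mat_adjoint U * U = 1\<^sub>m n" and uU2: "U * mat_adjoint U = 1\<^sub>m n"
    and jn: "j < n"
    and Z: "\<forall>i k. i < n \<longrightarrow> k < j \<longrightarrow> i \<noteq> k \<longrightarrow> (mat_adjoint U * H * U) $$ (i,k) = 0"
  shows "\<exists>U'. U' \<in> carrier_mat n n \<and> mat_adjoint U' * U' = 1\<^sub>m n \<and> U' * mat_adjoint U' = 1\<^sub>m n \<and>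
     (\<forall>i k. i < n \<longrightarrow> k < Suc j \<longrightarrow> i \<noteq> k \<longrightarrow> (mat_adjoint U' * H * U') $$ (i,k) = 0)"
proof -
  define T where "T = mat_adjoint U * H * U"
  have aU: "mat_adjoint U \<in> carrier_mat n n" using adj_carrier[OF U] .
  have aUH: "mat_adjoint U * H \<in> carrier_mat n n" using mult_carrier_mat[OF aU H] .
  have T: "T \<in> carrier_mat n n" unfolding T_def using mult_carrier_mat[OF aUH U] .
  have dT: "dim_row T = n" "dim_col T = n" using carrier_matD[OF T] by simp_all
  have "mat_adjoint T = mat_adjoint U * mat_adjoint (mat_adjoint U * H)"
    unfolding T_def by (rule adj_mult[OF aUH U])
  also have "\<dots> = mat_adjoint U * (H * U)" using adj_mult[OF aU H] hH by simp
  also have "\<dots> = T" unfolding T_def by (rule assoc_mult_mat[OF aU H U, symmetric])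
  finally have hT: "mat_adjoint T = T" .
  have Tcol: "T $$ (i,k) = 0" if "i < n" "k < j" "i \<noteq> k" for i k
    using Z that by (simp add: T_def)
  have Trow: "T $$ (i,k) = 0" if "i < j" "k < n" "i \<noteq> k" for i k
  proof -
    have "T $$ (i,k) = mat_adjoint T $$ (i,k)" using hT by simp
    also have "\<dots> = cnj (T $$ (k,i))" using that jn dT by simp
    also have "\<dots> = 0" using Tcol[of k i] that by simp
    finally show ?thesis .
  qed
  define T3 where "T3 = mat (n-j) (n-j) (\<lambda>(a,b). T $$ (a+j, b+j))"
  have T3: "T3 \<in> carrier_mat (n-j) (n-j)" by (simp add: T3_def)
  have "degree (char_poly T3) = n - j" using degree_monic_char_poly[OF T3] by simp
  then obtain \<mu> where "poly (char_poly T3) \<mu> = 0" using fta jn by (metis zero_less_diff)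
  then have "eigenvalue T3 \<mu>" using eigenvalue_root_char_poly[OF T3] by simp
  then obtain y where "eigenvector T3 y \<mu>" unfolding eigenvalue_def by blast
  then have y: "y \<in> carrier_vec (n-j)" and y0: "y \<noteq> 0\<^sub>v (n-j)" and Ty: "T3 *\<^sub>v y = \<mu> \<cdot>\<^sub>v y"
    unfolding eigenvector_def using T3 by (simp_all add: T3_def)
  have dy: "dim_vec y = n - j" using y by (simp only: carrier_vec_def mem_Collect_eq)
  define z where "z = vec n (\<lambda>i. if i < j then 0 else y $ (i - j))"
  have z: "z \<in> carrier_vec n" by (simp add: z_def)
  have Tz: "(T *\<^sub>v z) $ i = \<mu> * z $ i" if i: "i < n" for i
  proof -
    have "(T *\<^sub>v z) $ i = (\<Sum>k<n. T $$ (i,k) * z $ k)"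
      using i dT by (simp add: mv_entry z_def del: index_mult_mat_vec)
    also have "\<dots> = (\<Sum>k<n. if k < j then 0 else T $$ (i,k) * y $ (k - j))"
      by (intro sum.cong refl) (simp add: z_def)
    also have "\<dots> = (\<Sum>b<n-j. T $$ (i,b+j) * y $ b)"
      using shift_sum[of j n "\<lambda>k. T $$ (i,k) * y $ (k - j)"] jn by simp
    also have "\<dots> = \<mu> * z $ i"
    proof (cases "i < j")
      case True
      then have "(\<Sum>b<n-j. T $$ (i,b+j) * y $ b) = 0"
        using Trow[of i] by (intro sum.neutral) simp
      then show ?thesis using True i by (simp add: z_def)
    next
      case False
      have "(T3 *\<^sub>v y) $ (i - j) = (\<Sum>b<n-j. T3 $$ (i-j,b) * y $ b)"
        using False i dy by (simp add: mv_entry T3_def del: index_mult_mat_vec)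
      also have "\<dots> = (\<Sum>b<n-j. T $$ (i,b+j) * y $ b)"
        using False i by (intro sum.cong refl) (simp add: T3_def)
      finally have "(\<Sum>b<n-j. T $$ (i,b+j) * y $ b) = \<mu> * y $ (i - j)"
        using Ty False i dy by simp
      then show ?thesis using False i by (simp add: z_def)
    qed
    finally show ?thesis .
  qed
  obtain b where b: "b < n - j" and yb: "y $ b \<noteq> 0"
  proof -
    have "\<exists>b<n-j. y $ b \<noteq> 0"
    proof (rule ccontr)
      assume "\<not> ?thesis"
      then have "y = 0\<^sub>v (n-j)" using dy by (intro eq_vecI) simp_all
      then show False using y0 by simp
    qed
    then show ?thesis using that by blast
  qed
  have zb: "z $ (b+j) \<noteq> 0" using b yb by (simp add: z_def)
  define r where "r = sqrt (\<Sum>i<n. (cmod (z$i))^2)"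
  have "(cmod (z$(b+j)))^2 > 0" using zb by simp
  moreover have "(cmod (z$(b+j)))^2 \<le> (\<Sum>i<n. (cmod (z$i))^2)"
    using b by (intro member_le_sum) auto
  ultimately have ssum: "(\<Sum>i<n. (cmod (z$i))^2) > 0" by linarith
  then have r: "r > 0" by (simp add: r_def)
  have r2: "r^2 = (\<Sum>i<n. (cmod (z$i))^2)" using ssum by (simp add: r_def)
  define a where "a = complex_of_real (1 / r)"
  define u where "u = a \<cdot>\<^sub>v z"
  have u: "u \<in> carrier_vec n" by (simp add: u_def z_def)
  have ui: "u $ i = a * z $ i" if "i < n" for i using that by (simp add: u_def z_def)
  have un: "(\<Sum>i<n. u$i * cnj (u$i)) = 1"
  proof -
    have "(\<Sum>i<n. u$i * cnj (u$i)) = (\<Sum>i<n. complex_of_real ((cmod (z$i))^2 / r^2))"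
      using r by (intro sum.cong refl) (simp add: ui a_def zc field_simps power2_eq_square)
    also have "\<dots> = complex_of_real ((\<Sum>i<n. (cmod (z$i))^2) / r^2)"
      by (simp add: sum_divide_distrib)
    also have "\<dots> = 1" using r r2 ssum by simp
    finally show ?thesis .
  qed
  have u0: "\<forall>i<j. u$i = 0" using jn by (simp add: ui z_def)
  have Tu: "T *\<^sub>v u = \<mu> \<cdot>\<^sub>v u"
  proof (rule vec_eq_entries[of _ n])
    fix i assume i: "i < n"
    have "(T *\<^sub>v u) $ i = a * (T *\<^sub>v z) $ i"
      unfolding u_def using mult_mat_vec[OF T z, of a] i dT by simp
    then show "(T *\<^sub>v u) $ i = (\<mu> \<cdot>\<^sub>v u) $ i" using Tz[OF i] i u by (simp add: ui)
  qed (use T u in simp_all)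
  obtain V \<beta> where V: "V \<in> carrier_mat n n" and aV: "mat_adjoint V = V" and VV: "V * V = 1\<^sub>m n"
    and Vlow: "\<forall>i<j. V *\<^sub>v unit_vec n i = unit_vec n i" and Vj: "V *\<^sub>v unit_vec n j = \<beta> \<cdot>\<^sub>v u"
    using householder[OF u jn un u0] by blast
  define U' where "U' = U * V"
  have U': "U' \<in> carrier_mat n n" unfolding U'_def using mult_carrier_mat[OF U V] .
  have aU': "mat_adjoint U' = V * mat_adjoint U" unfolding U'_def using adj_mult[OF U V] aV by simp
  have VaU: "V * mat_adjoint U \<in> carrier_mat n n" using mult_carrier_mat[OF V aU] .
  have UV: "U * V \<in> carrier_mat n n" using mult_carrier_mat[OF U V] .
  have "mat_adjoint U' * U' = (V * mat_adjoint U) * (U * V)" unfolding aU' by (simp only: U'_def)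
  also have "\<dots> = V * (mat_adjoint U * (U * V))" by (rule assoc_mult_mat[OF V aU UV])
  also have "\<dots> = V * ((mat_adjoint U * U) * V)" using assoc_mult_mat[OF aU U V] by simp
  also have "\<dots> = 1\<^sub>m n" using uU1 V VV by simp
  finally have c1: "mat_adjoint U' * U' = 1\<^sub>m n" .
  have "U' * mat_adjoint U' = (U * V) * (V * mat_adjoint U)" unfolding aU' by (simp only: U'_def)
  also have "\<dots> = U * (V * (V * mat_adjoint U))" by (rule assoc_mult_mat[OF U V VaU])
  also have "\<dots> = U * ((V * V) * mat_adjoint U)" using assoc_mult_mat[OF V V aU] by simp
  also have "\<dots> = 1\<^sub>m n" using uU2 left_mult_one_mat[OF aU] VV by simp
  finally have c2: "U' * mat_adjoint U' = 1\<^sub>m n" .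
  define T' where "T' = mat_adjoint U' * H * U'"
  have T'c: "T' \<in> carrier_mat n n" unfolding T'_def
    using mult_carrier_mat[OF mult_carrier_mat[OF adj_carrier[OF U'] H] U'] .
  have T'x: "T' *\<^sub>v x = V *\<^sub>v (T *\<^sub>v (V *\<^sub>v x))" if x: "x \<in> carrier_vec n" for x
  proof -
    have Vx: "V *\<^sub>v x \<in> carrier_vec n" using mult_mat_vec_carrier[OF V x] .
    have "T' *\<^sub>v x = ((V * mat_adjoint U) * H) *\<^sub>v ((U * V) *\<^sub>v x)"
      unfolding T'_def aU' using assoc_mult_mat_vec[OF mult_carrier_mat[OF VaU H] UV x] by (simp add: U'_def)
    also have "\<dots> = (V * mat_adjoint U) *\<^sub>v (H *\<^sub>v (U *\<^sub>v (V *\<^sub>v x)))"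
      using assoc_mult_mat_vec[OF VaU H mult_mat_vec_carrier[OF UV x]] assoc_mult_mat_vec[OF U V x] by simp
    also have "\<dots> = V *\<^sub>v (mat_adjoint U *\<^sub>v (H *\<^sub>v (U *\<^sub>v (V *\<^sub>v x))))"
      using assoc_mult_mat_vec[OF V aU mult_mat_vec_carrier[OF H mult_mat_vec_carrier[OF U Vx]]] by simp
    also have "T *\<^sub>v (V *\<^sub>v x) = mat_adjoint U *\<^sub>v (H *\<^sub>v (U *\<^sub>v (V *\<^sub>v x)))"
      unfolding T_def using assoc_mult_mat_vec[OF aUH U Vx] assoc_mult_mat_vec[OF aU H mult_mat_vec_carrier[OF U Vx]] by simp
    ultimately show ?thesis by simp
  qed
  have Tek: "T *\<^sub>v unit_vec n k = T $$ (k,k) \<cdot>\<^sub>v unit_vec n k" if k: "k < j" for k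
  proof (rule vec_eq_entries[of _ n])
    fix i assume i: "i < n"
    show "(T *\<^sub>v unit_vec n k) $ i = (T $$ (k,k) \<cdot>\<^sub>v unit_vec n k) $ i"
      using unit_entry[OF T i, of k] k jn i Tcol[OF i k] by (cases "i = k") (simp_all add: unit_vec_def)
  qed (use T in simp_all)
  have col: "T' *\<^sub>v unit_vec n k = T' $$ (k,k) \<cdot>\<^sub>v unit_vec n k" if k: "k < Suc j" for k
  proof -
    have kn: "k < n" using k jn by simp
    obtain d where d: "T' *\<^sub>v unit_vec n k = d \<cdot>\<^sub>v unit_vec n k"
    proof (cases "k < j")
      case True
      have "T' *\<^sub>v unit_vec n k = V *\<^sub>v (T $$ (k,k) \<cdot>\<^sub>v unit_vec n k)"
        using T'x[of "unit_vec n k"] Vlow True Tek[OF True] by simp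
      also have "\<dots> = T $$ (k,k) \<cdot>\<^sub>v unit_vec n k"
        using mult_mat_vec[OF V unit_vec_carrier[of n k]] Vlow True by simp
      finally show ?thesis using that by blast
    next
      case False
      then have kj: "k = j" using k by simp
      have "T *\<^sub>v (V *\<^sub>v unit_vec n j) = \<beta> \<cdot>\<^sub>v (\<mu> \<cdot>\<^sub>v u)"
        using Vj mult_mat_vec[OF T u, of \<beta>] Tu by simp
      also have "\<dots> = \<mu> \<cdot>\<^sub>v (V *\<^sub>v unit_vec n j)"
        using Vj by (simp add: smult_smult_assoc mult.commute)
      finally have "T' *\<^sub>v unit_vec n j = V *\<^sub>v (\<mu> \<cdot>\<^sub>v (V *\<^sub>v unit_vec n j))"
        using T'x[of "unit_vec n j"] by simp
      also have "\<dots> = \<mu> \<cdot>\<^sub>v ((V * V) *\<^sub>v unit_vec n j)"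
        using mult_mat_vec[OF V mult_mat_vec_carrier[OF V unit_vec_carrier[of n j]], of \<mu>]
          assoc_mult_mat_vec[OF V V unit_vec_carrier[of n j]] by simp
      also have "\<dots> = \<mu> \<cdot>\<^sub>v unit_vec n j" using VV by simp
      finally show ?thesis using that kj by blast
    qed
    have "T' $$ (k,k) = d" using unit_entry[OF T'c kn kn] d kn by simp
    then show ?thesis using d by simp
  qed
  have "\<forall>i k. i < n \<longrightarrow> k < Suc j \<longrightarrow> i \<noteq> k \<longrightarrow> T' $$ (i,k) = 0"
  proof (intro allI impI)
    fix i k assume i: "i < n" and k: "k < Suc j" and ik: "i \<noteq> k"
    have kn: "k < n" using k jn by simp
    have "T' $$ (i,k) = (T' *\<^sub>v unit_vec n k) $ i" using unit_entry[OF T'c i kn] by simp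
    also have "\<dots> = 0" using col[OF k] i ik kn by simp
    finally show "T' $$ (i,k) = 0" .
  qed
  then show ?thesis using U' c1 c2 unfolding T'_def by blast
qed

lemma spectral:
  fixes H :: "complex mat"
  assumes H: "H \<in> carrier_mat n n" and hH: "mat_adjoint H = H"
  shows "\<exists>U. U \<in> carrier_mat n n \<and> mat_adjoint U * U = 1\<^sub>m n \<and> U * mat_adjoint U = 1\<^sub>m n \<and>
     (\<forall>i k. i < n \<longrightarrow> k < n \<longrightarrow> i \<noteq> k \<longrightarrow> (mat_adjoint U * H * U) $$ (i,k) = 0)"
proof -
  have "\<forall>j. j \<le> n \<longrightarrow> (\<exists>U. U \<in> carrier_mat n n \<and> mat_adjoint U * U = 1\<^sub>m n \<and> U * mat_adjoint U = 1\<^sub>m n \<and>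
     (\<forall>i k. i < n \<longrightarrow> k < j \<longrightarrow> i \<noteq> k \<longrightarrow> (mat_adjoint U * H * U) $$ (i,k) = 0))"
  proof (intro allI)
    fix j show "j \<le> n \<longrightarrow> (\<exists>U. U \<in> carrier_mat n n \<and> mat_adjoint U * U = 1\<^sub>m n \<and> U * mat_adjoint U = 1\<^sub>m n \<and>
     (\<forall>i k. i < n \<longrightarrow> k < j \<longrightarrow> i \<noteq> k \<longrightarrow> (mat_adjoint U * H * U) $$ (i,k) = 0))"
    proof (induction j)
      case 0
      have "1\<^sub>m n \<in> carrier_mat n n" by simp
      then show ?case by fastforce
    next
      case (Suc j)
      show ?case
      proof
        assume "Suc j \<le> n"
        then have jn: "j < n" by simp
        then obtain U where "U \<in> carrier_mat n n" "mat_adjoint U * U = 1\<^sub>m n" "U * mat_adjoint U = 1\<^sub>m n"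
          "\<forall>i k. i < n \<longrightarrow> k < j \<longrightarrow> i \<noteq> k \<longrightarrow> (mat_adjoint U * H * U) $$ (i,k) = 0"
          using Suc by auto
        from spectral_step[OF H hH this(1-3) jn this(4)] show "\<exists>U. U \<in> carrier_mat n n \<and> mat_adjoint U * U = 1\<^sub>m n \<and> U * mat_adjoint U = 1\<^sub>m n \<and>
          (\<forall>i k. i < n \<longrightarrow> k < Suc j \<longrightarrow> i \<noteq> k \<longrightarrow> (mat_adjoint U * H * U) $$ (i,k) = 0)" .
      qed
    qed
  qed
  then show ?thesis by blast
qed

lemma kernel_exists:
  fixes R :: "complex mat"
  assumes R: "R \<in> carrier_mat r c" and rc: "r < c"
  shows "\<exists>v. v \<in> carrier_vec c \<and> v \<noteq> 0\<^sub>v c \<and> R *\<^sub>v v = 0\<^sub>v r"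
proof -
  have dR: "dim_row R = r" "dim_col R = c" using carrier_matD[OF R] by simp_all
  define cf where "cf = (\<lambda>i. if i < r then row R i else 0\<^sub>v c)"
  define R' where "R' = mat\<^sub>r c c (\<lambda>i. if i = c - 1 then 0\<^sub>v c else cf i)"
  have R': "R' \<in> carrier_mat c c" by (rule carrier_matI) (simp_all add: R'_def)
  have cfc: "cf \<in> {0..<c} \<rightarrow> carrier_vec c"
  proof (rule Pi_I)
    fix i show "cf i \<in> carrier_vec c" using dR by (intro carrier_vecI) (simp add: cf_def)
  qed
  have "det R' = 0" unfolding R'_def using rc by (intro det_row_0 cfc) simp
  then obtain v where v: "v \<in> carrier_vec c" and v0: "v \<noteq> 0\<^sub>v c" and Rv: "R' *\<^sub>v v = 0\<^sub>v c"
    using det_0_iff_vec_prod_zero_field[OF R'] by blast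
  have "R *\<^sub>v v = 0\<^sub>v r"
  proof (rule vec_eq_entries[of _ r])
    fix a assume a: "a < r"
    have ac: "a \<noteq> c - 1" using a rc by simp
    have "row R' a = row R a" unfolding R'_def using a rc dR ac
      by (subst row_mat_of_row_fun) (simp_all add: cf_def)
    then have "(R' *\<^sub>v v) $ a = (R *\<^sub>v v) $ a" using a rc dR by (simp add: R'_def)
    then show "(R *\<^sub>v v) $ a = 0\<^sub>v r $ a" using Rv a rc by simp
  qed (use R v in simp_all)
  then show ?thesis using v v0 by blast
qed

lemma T_apply: fixes T :: "complex mat"
  assumes T: "T \<in> carrier_mat N N" and off: "\<forall>i k. i < N \<longrightarrow> k < N \<longrightarrow> i \<noteq> k \<longrightarrow> T $$ (i,k) = 0"
    and y: "y \<in> carrier_vec N" and i: "i < N"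
  shows "(T *\<^sub>v y) $ i = T $$ (i,i) * y $ i"
proof -
  have dT: "dim_row T = N" "dim_col T = N" using carrier_matD[OF T] by simp_all
  have dy: "dim_vec y = N" using y by (simp only: carrier_vec_def mem_Collect_eq)
  have "(T *\<^sub>v y) $ i = (\<Sum>k<N. T $$ (i,k) * y $ k)"
    using i dT dy by (simp add: mv_entry del: index_mult_mat_vec)
  also have "\<dots> = (\<Sum>k<N. if k = i then T $$ (i,i) * y $ i else 0)"
    using off i by (intro sum.cong refl) auto
  also have "\<dots> = T $$ (i,i) * y $ i" using i by simp
  finally show ?thesis .
qed

lemma cy_sum: "y \<in> carrier_vec N \<Longrightarrow> conjugate y \<bullet> y = complex_of_real (\<Sum>i<N. (cmod (y$i))^2)"
proof -
  assume y: "y \<in> carrier_vec N"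
  have dy: "dim_vec y = N" using y by (simp only: carrier_vec_def mem_Collect_eq)
  have "conjugate y \<bullet> y = (\<Sum>i<N. cnj (y$i) * y$i)"
    using dy by (subst sp_sum[of _ N]) (simp_all)
  also have "\<dots> = (\<Sum>i<N. complex_of_real ((cmod (y$i))^2))" by (intro sum.cong refl) (simp add: zc')
  finally show ?thesis by simp
qed

lemma re_lem: "Re (a * (complex_of_real r)^2) = Re a * r^2"
  by (simp add: power2_eq_square)

lemma count_big:
  fixes H U :: "complex mat" and t :: real
  assumes H: "H \<in> carrier_mat N N"
    and U: "U \<in> carrier_mat N N" and uU1: "mat_adjoint U * U = 1\<^sub>m N"
    and off: "\<forall>i k. i < N \<longrightarrow> k < N \<longrightarrow> i \<noteq> k \<longrightarrow> (mat_adjoint U * H * U) $$ (i,k) = 0"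
    and mN: "m \<le> N"
    and small: "\<And>x. x \<in> carrier_vec N \<Longrightarrow> (\<forall>i. m \<le> i \<longrightarrow> i < N \<longrightarrow> x$i = 0) \<Longrightarrow>
        Re (conjugate x \<bullet> (H *\<^sub>v x)) \<le> t * (\<Sum>i<N. (cmod (x$i))^2)"
  shows "card {i. i < N \<and> Re ((mat_adjoint U * H * U) $$ (i,i)) > t} \<le> N - m"
proof (rule ccontr)
  define T where "T = mat_adjoint U * H * U"
  define I where "I = {i. i < N \<and> Re (T $$ (i,i)) > t}"
  define k where "k = card I"
  assume "\<not> ?thesis"
  then have kN: "k > N - m" unfolding k_def I_def T_def by simp
  have aU: "mat_adjoint U \<in> carrier_mat N N" using adj_carrier[OF U] .
  have aUH: "mat_adjoint U * H \<in> carrier_mat N N" using mult_carrier_mat[OF aU H] .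
  have T: "T \<in> carrier_mat N N" unfolding T_def using mult_carrier_mat[OF aUH U] .
  have dU: "dim_row U = N" "dim_col U = N" using carrier_matD[OF U] by simp_all
  have dT: "dim_row T = N" "dim_col T = N" using carrier_matD[OF T] by simp_all
  have IN: "I \<subseteq> {..<N}" unfolding I_def by auto
  have finI: "finite I" using IN finite_subset by blast
  have kle: "k \<le> N" unfolding k_def using card_mono[OF _ IN] by simp
  define L where "L = sorted_list_of_set ({..<N} - I)"
  have setL: "set L = {..<N} - I" unfolding L_def by simp
  have lenL: "length L = N - k" unfolding L_def k_def using card_Diff_subset[OF finI IN] by simp
  define nr where "nr = (N - m) + (N - k)"
  have nrN: "nr < N" unfolding nr_def using kN kle mN by linarith
  define R where "R = mat nr N (\<lambda>(a,b). if a < N - m then U $$ (m + a, b) else (if b = L ! (a - (N - m)) then 1 else 0))"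
  have R: "R \<in> carrier_mat nr N" by (rule carrier_matI) (simp_all add: R_def)
  obtain y where y: "y \<in> carrier_vec N" and y0: "y \<noteq> 0\<^sub>v N" and Ry: "R *\<^sub>v y = 0\<^sub>v nr"
    using kernel_exists[OF R nrN] by blast
  have dy: "dim_vec y = N" using y by (simp only: carrier_vec_def mem_Collect_eq)
  have Ry_entry: "(R *\<^sub>v y) $ a = (\<Sum>b<N. R $$ (a,b) * y $ b)" if "a < nr" for a
    using that dy by (simp add: mv_entry R_def del: index_mult_mat_vec)
  have yout: "y $ i = 0" if "i < N" "i \<notin> I" for i
  proof -
    have "i \<in> set L" using setL that by simp
    then obtain p where p: "p < length L" and Lp: "L ! p = i" by (metis in_set_conv_nth)
    define a where "a = (N - m) + p"
    have a: "a < nr" using p lenL unfolding a_def nr_def by simp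
    have "0 = (R *\<^sub>v y) $ a" using Ry a by simp
    also have "\<dots> = (\<Sum>b<N. if b = i then y $ b else 0)"
      unfolding Ry_entry[OF a] using a Lp by (intro sum.cong refl) (simp add: R_def a_def)
    also have "\<dots> = y $ i" using that by simp
    finally show ?thesis by simp
  qed
  define x where "x = U *\<^sub>v y"
  have x: "x \<in> carrier_vec N" unfolding x_def using mult_mat_vec_carrier[OF U y] .
  have xhigh: "x $ i = 0" if "m \<le> i" "i < N" for i
  proof -
    define a where "a = i - m"
    have a: "a < nr" using that unfolding a_def nr_def by simp
    have "0 = (R *\<^sub>v y) $ a" using Ry a by simp
    also have "\<dots> = (\<Sum>b<N. U $$ (i,b) * y $ b)"
      unfolding Ry_entry[OF a] using a that by (intro sum.cong refl) (simp add: R_def a_def)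
    also have "\<dots> = x $ i" unfolding x_def using that dU dy by (simp add: mv_entry del: index_mult_mat_vec)
    finally show ?thesis by simp
  qed
  have Ty: "T *\<^sub>v y = mat_adjoint U *\<^sub>v (H *\<^sub>v x)"
    unfolding T_def x_def using assoc_mult_mat_vec[OF aUH U y] assoc_mult_mat_vec[OF aU H mult_mat_vec_carrier[OF U y]] by simp
  have "conjugate y \<bullet> (T *\<^sub>v y) = conjugate x \<bullet> (H *\<^sub>v x)"
    unfolding Ty x_def by (rule adj_ip[OF U y mult_mat_vec_carrier[OF H mult_mat_vec_carrier[OF U y]]])
  moreover have "conjugate y \<bullet> (T *\<^sub>v y) = (\<Sum>i<N. cnj (y$i) * (T $$ (i,i) * y$i))"
    using dy dT by (subst sp_sum[of _ N]) (simp, intro sum.cong refl, simp add: T_apply[OF T off[folded T_def] y] del: index_mult_mat_vec)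
  moreover have "(\<Sum>i<N. cnj (y$i) * (T $$ (i,i) * y$i)) = (\<Sum>i<N. T $$ (i,i) * (complex_of_real (cmod (y$i)))^2)"
    by (intro sum.cong refl) (simp only: zc[symmetric], simp add: mult_ac)
  ultimately have q0: "conjugate x \<bullet> (H *\<^sub>v x) = (\<Sum>i<N. T $$ (i,i) * (complex_of_real (cmod (y$i)))^2)"
    by simp
  have q: "Re (conjugate x \<bullet> (H *\<^sub>v x)) = (\<Sum>i<N. Re (T $$ (i,i)) * (cmod (y$i))^2)"
    unfolding q0 Re_sum by (intro sum.cong refl) (simp add: re_lem)
  have "conjugate x \<bullet> x = conjugate y \<bullet> (mat_adjoint U *\<^sub>v x)"
    unfolding x_def by (rule adj_ip[OF U y mult_mat_vec_carrier[OF U y], symmetric])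
  also have "\<dots> = conjugate y \<bullet> y" unfolding x_def using assoc_mult_mat_vec[OF aU U y] uU1 y by simp
  finally have "complex_of_real (\<Sum>i<N. (cmod (x$i))^2) = complex_of_real (\<Sum>i<N. (cmod (y$i))^2)"
    using cy_sum[OF x] cy_sum[OF y] by metis
  then have "(\<Sum>i<N. (cmod (x$i))^2) = (\<Sum>i<N. (cmod (y$i))^2)" by (metis of_real_eq_iff)
  then have le: "(\<Sum>i<N. Re (T $$ (i,i)) * (cmod (y$i))^2) \<le> t * (\<Sum>i<N. (cmod (y$i))^2)"
    using small[OF x] xhigh q by simp
  obtain i0 where i0: "i0 < N" and yi0: "y $ i0 \<noteq> 0"
  proof -
    have "\<exists>i<N. y $ i \<noteq> 0"
    proof (rule ccontr)
      assume "\<not> ?thesis"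
      then have "y = 0\<^sub>v N" using dy by (intro eq_vecI) simp_all
      then show False using y0 by simp
    qed
    then show ?thesis using that by blast
  qed
  have i0I: "i0 \<in> I" using yout[OF i0] yi0 by blast
  have terms: "(Re (T $$ (i,i)) - t) * (cmod (y$i))^2 \<ge> 0" if "i < N" for i
  proof (cases "i \<in> I")
    case True then show ?thesis unfolding I_def by simp
  next
    case False then show ?thesis using yout[OF that] by simp
  qed
  have "(Re (T $$ (i0,i0)) - t) * (cmod (y$i0))^2 > 0" using i0I yi0 unfolding I_def by simp
  also have "\<dots> \<le> (\<Sum>i<N. (Re (T $$ (i,i)) - t) * (cmod (y$i))^2)"
    using i0 terms by (intro member_le_sum) auto
  also have "\<dots> = (\<Sum>i<N. Re (T $$ (i,i)) * (cmod (y$i))^2) - t * (\<Sum>i<N. (cmod (y$i))^2)"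
    by (simp add: left_diff_distrib sum_subtractf sum_distrib_left)
  finally show False using le by simp
qed

lemma prod_perm: "mset bs = mset cs \<Longrightarrow> (\<Prod>b\<leftarrow>bs. f b) = (\<Prod>b\<leftarrow>cs. (f b :: 'a :: comm_monoid_mult))"
  by (metis mset_map prod_mset_prod_list)

lemma poly_lin: "poly (\<Prod>a\<leftarrow>as. [:-a,1:]) (x::complex) = (\<Prod>a\<leftarrow>as. x - a)"
proof (induct as)
  case (Cons a as)
  then show ?case by (simp add: algebra_simps)
qed simp

lemma prod_lin_mset: fixes as bs :: "complex list"
  shows "(\<Prod>a\<leftarrow>as. [:-a,1:]) = (\<Prod>b\<leftarrow>bs. [:-b,1:]) \<Longrightarrow> mset as = mset bs"
proof (induct as arbitrary: bs)
  case Nil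
  show ?case
  proof (cases bs)
    case (Cons b bs')
    have "poly (\<Prod>b\<leftarrow>bs. [:-b,1:]) b = 0" unfolding poly_lin using Cons by simp
    then show ?thesis using Nil(1) by simp
  qed simp
next
  case (Cons a as)
  have "poly (\<Prod>b\<leftarrow>bs. [:-b,1:]) a = 0" unfolding Cons(2)[symmetric] poly_lin by simp
  then have "(\<Prod>b\<leftarrow>bs. a - b) = 0" unfolding poly_lin .
  then have "0 \<in> set (map (\<lambda>b. a - b) bs)" by (simp add: prod_list_zero_iff)
  then have abs: "a \<in> set bs" by auto
  define rs where "rs = remove1 a bs"
  have mbs: "mset bs = mset (a # rs)" unfolding rs_def using abs by simp
  have "(\<Prod>b\<leftarrow>bs. [:-b,1:]) = (\<Prod>b\<leftarrow>a # rs. [:-b,1:])" using prod_perm[OF mbs] .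
  then have "[:-a,1:] * (\<Prod>b\<leftarrow>as. [:-b,1:]) = [:-a,1:] * (\<Prod>b\<leftarrow>rs. [:-b,1:])"
    using Cons(2) by simp
  moreover have nz: "[:-a,1:] \<noteq> (0::complex poly)" by simp
  ultimately have "(\<Prod>b\<leftarrow>as. [:-b,1:]) = (\<Prod>b\<leftarrow>rs. [:-b,1:])" using mult_left_cancel[OF nz] by blast
  then have "mset as = mset rs" using Cons(1) by blast
  then show ?case using mbs by simp
qed

lemma sorted_nth_le: fixes xs :: "real list"
  assumes s: "sorted xs" and q: "q < length xs" and f: "q < length (filter (\<lambda>x. x \<le> c) xs)"
  shows "xs ! q \<le> c"
proof (rule ccontr)
  assume "\<not> ?thesis"
  then have gt: "xs ! q > c" by simp
  have "{i. i < length xs \<and> xs ! i \<le> c} \<subseteq> {..<q}"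
  proof
    fix i assume i: "i \<in> {i. i < length xs \<and> xs ! i \<le> c}"
    show "i \<in> {..<q}"
    proof (rule ccontr)
      assume "i \<notin> {..<q}"
      then have "q \<le> i" by simp
      then have "xs ! q \<le> xs ! i" using sorted_nth_mono[OF s] i by simp
      then show False using gt i by simp
    qed
  qed
  then have "card {i. i < length xs \<and> xs ! i \<le> c} \<le> q" using card_mono[of "{..<q}"] by fastforce
  then show False using f by (simp add: length_filter_conv_card)
qed

lemma vnorm2_smult: "vnorm2 (a \<cdot>\<^sub>v v) = cmod a * vnorm2 v"
proof -
  have "vnorm2 (a \<cdot>\<^sub>v v) = sqrt ((cmod a)^2 * (\<Sum>i<dim_vec v. (cmod (v$i))^2))"
    unfolding vnorm2_def by (simp add: sum_distrib_left norm_mult power_mult_distrib)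
  also have "\<dots> = cmod a * vnorm2 v" unfolding vnorm2_def by (simp add: real_sqrt_mult)
  finally show ?thesis .
qed

lemma vnorm2_sq: "(vnorm2 v)^2 = (\<Sum>i<dim_vec v. (cmod (v$i))^2)"
  unfolding vnorm2_def by (simp add: sum_nonneg)

lemma vnorm2_nonneg: "vnorm2 v \<ge> 0"
  unfolding vnorm2_def by (simp add: sum_nonneg)

lemma mnorm2_props:
  fixes M :: "complex mat"
  assumes M: "M \<in> carrier_mat m m" and m: "0 < m"
  shows "mnorm2 M \<ge> 0" and "\<And>v. v \<in> carrier_vec m \<Longrightarrow> vnorm2 (M *\<^sub>v v) \<le> mnorm2 M * vnorm2 v"
proof -
  have dM: "dim_row M = m" "dim_col M = m" using carrier_matD[OF M] by simp_all
  define SS where "SS = {vnorm2 (M *\<^sub>v v) | v. v \<in> carrier_vec (dim_col M) \<and> vnorm2 v = 1}"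
  have mn: "mnorm2 M = Sup SS" unfolding mnorm2_def SS_def ..
  define K0 where "K0 = (\<Sum>i<m. \<Sum>k<m. cmod (M $$ (i,k)))"
  have bnd: "vnorm2 (M *\<^sub>v v) \<le> sqrt (real m * K0^2)" if v: "v \<in> carrier_vec m" and v1: "vnorm2 v = 1" for v
  proof -
    have dv: "dim_vec v = m" using v by (simp only: carrier_vec_def mem_Collect_eq)
    have vk: "cmod (v$k) \<le> 1" if "k < m" for k
    proof -
      have "(cmod (v$k))^2 \<le> (\<Sum>i<m. (cmod (v$i))^2)" using that by (intro member_le_sum) auto
      also have "\<dots> = 1" using vnorm2_sq[of v] v1 dv by simp
      finally show ?thesis by (simp add: power_le_one_iff)
    qed
    have ent: "cmod ((M *\<^sub>v v) $ i) \<le> K0" if i: "i < m" for i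
    proof -
      have "(M *\<^sub>v v) $ i = (\<Sum>k<m. M $$ (i,k) * v $ k)"
        using i dM dv by (simp add: mv_entry del: index_mult_mat_vec)
      then have "cmod ((M *\<^sub>v v) $ i) \<le> (\<Sum>k<m. cmod (M $$ (i,k) * v $ k))"
        using norm_sum by metis
      also have "\<dots> \<le> (\<Sum>k<m. cmod (M $$ (i,k)))"
        using vk by (intro sum_mono) (simp add: norm_mult mult_left_le)
      also have "\<dots> \<le> K0" unfolding K0_def using i
        by (intro member_le_sum[of i "{..<m}" "\<lambda>i. \<Sum>k<m. cmod (M $$ (i,k))"]) (auto intro: sum_nonneg)
      finally show ?thesis .
    qed
    have "(\<Sum>i<m. (cmod ((M *\<^sub>v v) $ i))^2) \<le> (\<Sum>i<m. K0^2)"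
      using ent by (intro sum_mono power_mono) auto
    then have "(\<Sum>i<dim_vec (M *\<^sub>v v). (cmod ((M *\<^sub>v v) $ i))^2) \<le> real m * K0^2" using dM by simp
    then show ?thesis unfolding vnorm2_def by (simp add: real_sqrt_le_mono)
  qed
  have bdd: "bdd_above SS"
  proof (rule bdd_aboveI)
    fix x assume "x \<in> SS"
    then obtain v where "x = vnorm2 (M *\<^sub>v v)" "v \<in> carrier_vec (dim_col M)" "vnorm2 v = 1"
      unfolding SS_def by blast
    then show "x \<le> sqrt (real m * K0^2)" using bnd dM by simp
  qed
  have u1: "vnorm2 (unit_vec m 0) = 1"
  proof -
    have "(\<Sum>i<m. (cmod (unit_vec m 0 $ i))^2) = (\<Sum>i<m. if i = 0 then 1 else 0)"
      by (intro sum.cong refl) simp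
    also have "\<dots> = 1" using m by simp
    finally show ?thesis unfolding vnorm2_def by simp
  qed
  have upper: "vnorm2 (M *\<^sub>v v) \<le> mnorm2 M" if "v \<in> carrier_vec m" "vnorm2 v = 1" for v
    unfolding mn using that dM by (intro cSup_upper bdd) (auto simp: SS_def)
  show nn: "mnorm2 M \<ge> 0"
    using upper[OF unit_vec_carrier u1] vnorm2_nonneg[of "M *\<^sub>v unit_vec m 0"] by linarith
  fix v :: "complex vec" assume v: "v \<in> carrier_vec m"
  have dv: "dim_vec v = m" using v by (simp only: carrier_vec_def mem_Collect_eq)
  show "vnorm2 (M *\<^sub>v v) \<le> mnorm2 M * vnorm2 v"
  proof (cases "vnorm2 v = 0")
    case True
    then have "(\<Sum>i<m. (cmod (v$i))^2) = 0" using vnorm2_sq[of v] dv by simp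
    then have "\<forall>i\<in>{..<m}. (cmod (v$i))^2 = 0" by (subst (asm) sum_nonneg_eq_0_iff) auto
    then have "v = 0\<^sub>v m" using dv by (intro eq_vecI) auto
    then have v0: "v = 0\<^sub>v m" .
    have "M *\<^sub>v v = 0\<^sub>v m"
    proof (rule vec_eq_entries[of _ m])
      fix i assume i: "i < m"
      show "(M *\<^sub>v v) $ i = 0\<^sub>v m $ i" using i dM dv v0 by (simp add: mv_entry del: index_mult_mat_vec)
    qed (use mult_mat_vec_carrier[OF M v] in simp_all)
    then have "vnorm2 (M *\<^sub>v v) = vnorm2 (0\<^sub>v m)" by (simp only:)
    also have "\<dots> = 0" by (simp add: vnorm2_def)
    finally have "vnorm2 (M *\<^sub>v v) = 0" .
    then show ?thesis using True by simp
  next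
    case False
    then have vp: "vnorm2 v > 0" using vnorm2_nonneg[of v] by simp
    define a where "a = complex_of_real (1 / vnorm2 v)"
    have w: "a \<cdot>\<^sub>v v \<in> carrier_vec m" using v by simp
    have "vnorm2 (a \<cdot>\<^sub>v v) = 1" using vp by (simp add: vnorm2_smult a_def norm_divide)
    then have "vnorm2 (M *\<^sub>v (a \<cdot>\<^sub>v v)) \<le> mnorm2 M" using upper[OF w] by simp
    moreover have "vnorm2 (M *\<^sub>v (a \<cdot>\<^sub>v v)) = vnorm2 (M *\<^sub>v v) / vnorm2 v"
      using mult_mat_vec[OF M v, of a] vp by (simp add: vnorm2_smult a_def norm_divide)
    ultimately show ?thesis using vp by (simp add: field_simps)
  qed
qed

lemma Mmat_carrier:
  assumes "B \<in> carrier_mat n m" "C \<in> carrier_mat m n" "D \<in> carrier_mat m m"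
  shows "Mmat A B C D l \<in> carrier_mat m m"
proof -
  have "dim_row D = m" "dim_col D = m" "dim_row C = m" "dim_col B = m"
    using carrier_matD[OF assms(1)] carrier_matD[OF assms(2)] carrier_matD[OF assms(3)] by simp_all
  then show ?thesis by (intro carrier_matI) (simp_all add: Mmat_def)
qed

lemma S3_entry:
  assumes i: "i < 3 * m" and k: "k < m"
  shows "S3 m A B C D l1 l2 l3 g12 g13 g23 $$ (i,k) = (if i < m then Mmat A B C D l1 $$ (i,k) else 0)"
proof -
  have m0: "0 < m" using k by simp
  have kd: "k div m = 0" "k mod m = k" using k by simp_all
  have im: "i mod m < m" using m0 by simp
  show ?thesis
  proof (cases "i < m")
    case True
    then have "i div m = 0" "i mod m = i" by simp_all
    then show ?thesis using i k True kd by (simp add: S3_def block3_def Let_def)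
  next
    case False
    then have "i div m \<noteq> 0" using m0 by (simp add: div_eq_0_iff)
    then show ?thesis using i k False kd im by (simp add: S3_def block3_def Let_def)
  qed
qed

lemma sqrt_le_iff_sq: fixes r c :: real assumes "c \<ge> 0" shows "(sqrt r \<le> c) = (r \<le> c^2)"
proof
  assume a: "sqrt r \<le> c"
  show "r \<le> c^2"
  proof (rule ccontr)
    assume "\<not> r \<le> c^2"
    then have "c^2 < r" by simp
    then have "sqrt (c^2) < sqrt r" by (rule real_sqrt_less_mono)
    then show False using a assms by simp
  qed
next
  assume "r \<le> c^2"
  then have "sqrt r \<le> sqrt (c^2)" by (rule real_sqrt_le_mono)
  then show "sqrt r \<le> c" using assms by simp
qed

lemma len_filter_mset: "mset xs = mset ys \<Longrightarrow> length (filter P xs) = length (filter P ys)"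
  by (metis mset_filter size_mset)

theorem mainTheorem4:
  fixes A B C D :: "complex mat" and n m :: nat
    and l1 l2 l3 g12 g13 g23 :: complex
  assumes "A \<in> carrier_mat n n" and "B \<in> carrier_mat n m"
    and "C \<in> carrier_mat m n" and "D \<in> carrier_mat m m"
    and "m \<ge> 3"
    and "l1 \<noteq> l2" and "l1 \<noteq> l3" and "l2 \<noteq> l3"
    and "\<not> eigenvalue A l1" and "\<not> eigenvalue A l2" and "\<not> eigenvalue A l3"
  shows "sval (3 * m - 2) (S3 m A B C D l1 l2 l3 g12 g13 g23)
           \<le> Max {mnorm2 (Mmat A B C D l1), mnorm2 (Mmat A B C D l2), mnorm2 (Mmat A B C D l3)}"
proof -
  define N where "N = 3 * m"
  define S where "S = S3 m A B C D l1 l2 l3 g12 g13 g23"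
  define M1 where "M1 = Mmat A B C D l1"
  define c where "c = mnorm2 M1"
  have m0: "0 < m" using assms(5) by simp
  have M1: "M1 \<in> carrier_mat m m" unfolding M1_def using Mmat_carrier[OF assms(2-4)] .
  have dM1: "dim_row M1 = m" "dim_col M1 = m" using carrier_matD[OF M1] by simp_all
  have c0: "c \<ge> 0" unfolding c_def using mnorm2_props(1)[OF M1 m0] .
  have cb: "\<And>v. v \<in> carrier_vec m \<Longrightarrow> vnorm2 (M1 *\<^sub>v v) \<le> c * vnorm2 v"
    unfolding c_def using mnorm2_props(2)[OF M1 m0] .
  have S: "S \<in> carrier_mat N N" unfolding S_def N_def
    by (rule carrier_matI) (simp_all add: S3_def block3_def)
  have Sent: "S $$ (i,k) = (if i < m then M1 $$ (i,k) else 0)" if "i < N" "k < m" for i k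
    using S3_entry[of i m k] that unfolding S_def M1_def N_def by simp
  define H where "H = mat_adjoint S * S"
  have aS: "mat_adjoint S \<in> carrier_mat N N" using adj_carrier[OF S] .
  have H: "H \<in> carrier_mat N N" unfolding H_def using mult_carrier_mat[OF aS S] .
  have hH: "mat_adjoint H = H" unfolding H_def using adj_mult[OF aS S] by simp
  obtain U where U: "U \<in> carrier_mat N N" and uU1: "mat_adjoint U * U = 1\<^sub>m N" and uU2: "U * mat_adjoint U = 1\<^sub>m N"
    and off: "\<forall>i k. i < N \<longrightarrow> k < N \<longrightarrow> i \<noteq> k \<longrightarrow> (mat_adjoint U * H * U) $$ (i,k) = 0"
    using spectral[OF H hH] by blast
  define T where "T = mat_adjoint U * H * U"
  have aU: "mat_adjoint U \<in> carrier_mat N N" using adj_carrier[OF U] .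
  have aUH: "mat_adjoint U * H \<in> carrier_mat N N" using mult_carrier_mat[OF aU H] .
  have T: "T \<in> carrier_mat N N" unfolding T_def using mult_carrier_mat[OF aUH U] .
  have dT: "dim_row T = N" "dim_col T = N" using carrier_matD[OF T] by simp_all
  have small: "Re (conjugate x \<bullet> (H *\<^sub>v x)) \<le> c^2 * (\<Sum>i<N. (cmod (x$i))^2)"
    if x: "x \<in> carrier_vec N" and xz: "\<forall>i. m \<le> i \<longrightarrow> i < N \<longrightarrow> x$i = 0" for x
  proof -
    have dx: "dim_vec x = N" using x by (simp only: carrier_vec_def mem_Collect_eq)
    define x' where "x' = vec m (\<lambda>i. x $ i)"
    have x': "x' \<in> carrier_vec m" by (simp add: x'_def)
    have Sx: "S *\<^sub>v x \<in> carrier_vec N" using mult_mat_vec_carrier[OF S x] .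
    have "conjugate x \<bullet> (H *\<^sub>v x) = conjugate x \<bullet> (mat_adjoint S *\<^sub>v (S *\<^sub>v x))"
      unfolding H_def using assoc_mult_mat_vec[OF aS S x] by simp
    also have "\<dots> = conjugate (S *\<^sub>v x) \<bullet> (S *\<^sub>v x)" by (rule adj_ip[OF S x Sx])
    also have "\<dots> = complex_of_real (\<Sum>i<N. (cmod ((S *\<^sub>v x) $ i))^2)" by (rule cy_sum[OF Sx])
    finally have q: "Re (conjugate x \<bullet> (H *\<^sub>v x)) = (\<Sum>i<N. (cmod ((S *\<^sub>v x) $ i))^2)" by simp
    have Sxi: "(S *\<^sub>v x) $ i = (if i < m then (M1 *\<^sub>v x') $ i else 0)" if i: "i < N" for i
    proof -
      have dS: "dim_row S = N" "dim_col S = N" using carrier_matD[OF S] by simp_all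
      have "(S *\<^sub>v x) $ i = (\<Sum>k<N. S $$ (i,k) * x $ k)"
        using i dS dx by (simp add: mv_entry del: index_mult_mat_vec)
      also have "\<dots> = (\<Sum>k<m. S $$ (i,k) * x $ k)"
        using xz N_def by (intro sum.mono_neutral_right) auto
      also have "\<dots> = (\<Sum>k<m. (if i < m then M1 $$ (i,k) else 0) * x $ k)"
        using i Sent by (intro sum.cong refl) simp
      also have "\<dots> = (if i < m then (M1 *\<^sub>v x') $ i else 0)"
        using dM1 by (simp add: mv_entry x'_def del: index_mult_mat_vec)
      finally show ?thesis .
    qed
    have "(\<Sum>i<N. (cmod ((S *\<^sub>v x) $ i))^2) = (\<Sum>i<N. if i < m then (cmod ((M1 *\<^sub>v x') $ i))^2 else 0)"
      using Sxi by (intro sum.cong refl) simp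
    also have "\<dots> = (\<Sum>i<m. (cmod ((M1 *\<^sub>v x') $ i))^2)"
      using N_def by (intro sum.mono_neutral_cong_right) auto
    also have "\<dots> = (vnorm2 (M1 *\<^sub>v x'))^2" using dM1 by (simp add: vnorm2_sq)
    also have "\<dots> \<le> (c * vnorm2 x')^2"
      using cb[OF x'] vnorm2_nonneg[of "M1 *\<^sub>v x'"] by (intro power_mono) auto
    also have "\<dots> = c^2 * (\<Sum>i<m. (cmod (x$i))^2)"
      by (simp add: power_mult_distrib vnorm2_sq x'_def)
    also have "(\<Sum>i<m. (cmod (x$i))^2) = (\<Sum>i<N. (cmod (x$i))^2)"
      using xz N_def by (intro sum.mono_neutral_left) auto
    finally show ?thesis using q by simp
  qed
  have mN: "m \<le> N" unfolding N_def by simp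
  have cnt: "card {i. i < N \<and> Re (T $$ (i,i)) > c^2} \<le> N - m"
    unfolding T_def using count_big[OF H U uU1 off mN small] by blast
  have "U * T = H * U"
  proof -
    have "U * T = U * ((mat_adjoint U * H) * U)" unfolding T_def ..
    also have "\<dots> = (U * (mat_adjoint U * H)) * U" using assoc_mult_mat[OF U aUH U] by simp
    also have "\<dots> = ((U * mat_adjoint U) * H) * U" using assoc_mult_mat[OF U aU H] by simp
    finally show ?thesis using uU2 H by simp
  qed
  then have "U * T * mat_adjoint U = H * U * mat_adjoint U" by simp
  also have "\<dots> = H" using assoc_mult_mat[OF H U aU] uU2 H by simp
  finally have HUT: "H = U * T * mat_adjoint U" by simp
  have "similar_mat H T" unfolding similar_mat_def
  proof (intro exI)
    show "similar_mat_wit H T U (mat_adjoint U)"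
      unfolding similar_mat_wit_def Let_def using H T U aU uU1 uU2 carrier_matD[OF H] by (simp add: HUT[symmetric])
  qed
  then have cpHT: "char_poly H = char_poly T" by (rule char_poly_similar)
  have ut: "upper_triangular T" unfolding upper_triangular_def using off dT T_def by auto
  have cpT: "char_poly T = (\<Prod>a\<leftarrow>diag_mat T. [:- a, 1:])" by (rule char_poly_upper_triangular[OF T ut])
  have ldT: "length (diag_mat T) = N" by (simp add: diag_mat_def dT)
  define es where "es = eigs H"
  have "\<exists>as. char_poly H = (\<Prod>a\<leftarrow>as. [:- a, 1:]) \<and> length as = dim_row H"
    using cpHT cpT ldT carrier_matD[OF H] by metis
  then have es: "char_poly H = (\<Prod>a\<leftarrow>es. [:- a, 1:])" and les: "length es = dim_row H"
    unfolding es_def eigs_def by (metis (mono_tags, lifting) someI_ex)+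
  have mes: "mset es = mset (diag_mat T)" using prod_lin_mset es cpHT cpT by metis
  define L where "L = map (\<lambda>a. sqrt (Re a)) es"
  have sv: "sing_vals S = rev (sort L)" unfolding sing_vals_def L_def H_def es_def ..
  have lL: "length L = N" using les carrier_matD[OF H] by (simp add: L_def)
  have "length (filter (\<lambda>x. x \<le> c) (sort L)) = length (filter (\<lambda>x. x \<le> c) L)"
    by (rule len_filter_mset) simp
  also have "\<dots> = length (filter (\<lambda>a. Re a \<le> c^2) es)"
    unfolding L_def by (simp add: filter_map o_def sqrt_le_iff_sq[OF c0])
  also have "\<dots> = length (filter (\<lambda>a. Re a \<le> c^2) (diag_mat T))" by (rule len_filter_mset[OF mes])
  also have "\<dots> = card {i. i < N \<and> Re (T $$ (i,i)) \<le> c^2}"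
    unfolding length_filter_conv_card ldT by (simp add: diag_mat_def dT cong: conj_cong)
  finally have lf: "length (filter (\<lambda>x. x \<le> c) (sort L)) = card {i. i < N \<and> Re (T $$ (i,i)) \<le> c^2}" .
  have "{i. i < N \<and> Re (T $$ (i,i)) \<le> c^2} = {..<N} - {i. i < N \<and> Re (T $$ (i,i)) > c^2}" by auto
  then have "card {i. i < N \<and> Re (T $$ (i,i)) \<le> c^2} = N - card {i. i < N \<and> Re (T $$ (i,i)) > c^2}"
    by (simp add: card_Diff_subset subset_iff)
  then have "card {i. i < N \<and> Re (T $$ (i,i)) \<le> c^2} \<ge> m" using cnt mN by linarith
  then have f2: "2 < length (filter (\<lambda>x. x \<le> c) (sort L))" using lf assms(5) by linarith
  have ls: "length (sort L) = N" using lL by simp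
  have "sort L ! 2 \<le> c"
    using sorted_nth_le[OF sorted_sort _ f2] ls assms(5) N_def by simp
  moreover have "sval (3 * m - 2) S = sort L ! 2"
  proof -
    have "sval (3 * m - 2) S = rev (sort L) ! (3 * m - 3)" unfolding sval_def sv by (simp add: numeral_3_eq_3)
    also have "\<dots> = sort L ! (N - Suc (3 * m - 3))" using ls N_def assms(5) by (simp add: rev_nth)
    also have "N - Suc (3 * m - 3) = 2" using N_def assms(5) by simp
    finally show ?thesis .
  qed
  moreover have "c \<le> Max {mnorm2 (Mmat A B C D l1), mnorm2 (Mmat A B C D l2), mnorm2 (Mmat A B C D l3)}"
    unfolding c_def M1_def by (rule Max_ge) simp_all
  ultimately show ?thesis unfolding S_def by linarith
qed


end
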